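(* Let $\tilde{\mathcal{X}}=\mathcal{Y}=\mathcal{Z}=\{0,1\}$ and $\mathcal{X}=\tilde{\mathcal{X}}\times\mathcal{Z}$. The channel input is $X=(\tilde X,\tilde Z)$; let $N\sim\mathsf{Ber}(0.5)$ be independent of $X$, set $Y=\tilde X\tilde Z+N(1-\tilde Z)$ with induced kernel $P_{Y|\tilde X,\tilde Z}$, and define the wiretap channel $P_{Y,Z|\tilde X,\tilde Z}=P_{Y|\tilde X,\tilde Z}\mathbb{1}\{Z=\tilde Z\}$. Let the cost function be $\mathsf{C}(\tilde x,\tilde z)=\tilde z$ and the cost constraint $b=0.5$. Then $$\max_{P_{U,V,X}} \big(I_P(V;Y|U)-I_P(V;Z|U)\big)\ \ge\ 0.5\ >\ \max_{P_{V,X}:\ \mathbb{E}_P[\mathsf{C}(X)]\le 0.5}\big(I_P(V;Y)-I_P(V;Z)\big),$$ where the first maximum is over finite sets $\mathcal{U},\mathcal{V}$ and PMFs $P_{U,V,X}$ with $P_{U,V,X}=P_{U,V}P_{X|V}$ and $\mathbb{E}_P[\mathsf{C}(X)]\le 0.5$, computed under $P_{U,V,X}P_{Y,Z|X}$, and the second maximum is over finite sets $\mathcal{V}$ and PMFs $P_{V,X}$, computed under $P_{V,X}P_{Y,Z|X}$.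
   Context: The left-hand maximum is the quantity $\bar C(0.5)$, which (by the paper's main theorem) equals the secrecy-capacity of this cost-constrained wiretap channel; the right-hand side is the single-auxiliary analogue of the unconstrained wiretap secrecy-capacity formula restricted to cost-feasible input distributions. *)

theory Defs
  imports "HOL-Probability.Probability"
begin

definition cond_mutual_info :: "('a \<times> 'b \<times> 'c) pmf \<Rightarrow> real" where
  "cond_mutual_info J =
     (\<Sum>(a,b,c)\<in>set_pmf J.
        pmf J (a,b,c) *
        log 2 (pmf J (a,b,c) * pmf (map_pmf fst J) a /
               (pmf (map_pmf (\<lambda>(a,b,c). (a,b)) J) (a,b) *
                pmf (map_pmf (\<lambda>(a,b,c). (a,c)) J) (a,c))))"

definition mutual_info :: "('b \<times> 'c) pmf \<Rightarrow> real" where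
  "mutual_info J = cond_mutual_info (map_pmf (\<lambda>(b,c). ((),b,c)) J)"

definition input_alph :: "(nat \<times> nat) set" where
  "input_alph = {0,1} \<times> {0,1}"

definition cost :: "nat \<times> nat \<Rightarrow> real" where
  "cost x = real (snd x)"

definition wiretap :: "nat \<times> nat \<Rightarrow> (nat \<times> nat) pmf" where
  "wiretap x = map_pmf (\<lambda>n. (fst x * snd x + (if n then 1 else 0) * (1 - snd x), snd x))
                       (bernoulli_pmf (1/2))"

definition markov_joint :: "('u \<times> 'v) pmf \<Rightarrow> ('v \<Rightarrow> (nat \<times> nat) pmf) \<Rightarrow> ('u \<times> 'v \<times> (nat \<times> nat)) pmf" where
  "markov_joint PUV K = bind_pmf PUV (\<lambda>(u,v). map_pmf (\<lambda>x. (u,v,x)) (K v))"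

definition out_joint3 :: "('u \<times> 'v \<times> (nat \<times> nat)) pmf \<Rightarrow> ('u \<times> 'v \<times> nat \<times> nat) pmf" where
  "out_joint3 P = bind_pmf P (\<lambda>(u,v,x). map_pmf (\<lambda>(y,z). (u,v,y,z)) (wiretap x))"

definition out_joint2 :: "('v \<times> (nat \<times> nat)) pmf \<Rightarrow> ('v \<times> nat \<times> nat) pmf" where
  "out_joint2 P = bind_pmf P (\<lambda>(v,x). map_pmf (\<lambda>(y,z). (v,y,z)) (wiretap x))"

definition obj3 :: "('u \<times> 'v \<times> (nat \<times> nat)) pmf \<Rightarrow> real" where
  "obj3 P = cond_mutual_info (map_pmf (\<lambda>(u,v,y,z). (u,v,y)) (out_joint3 P))
          - cond_mutual_info (map_pmf (\<lambda>(u,v,y,z). (u,v,z)) (out_joint3 P))"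

definition obj2 :: "('v \<times> (nat \<times> nat)) pmf \<Rightarrow> real" where
  "obj2 P = mutual_info (map_pmf (\<lambda>(v,y,z). (v,y)) (out_joint2 P))
          - mutual_info (map_pmf (\<lambda>(v,y,z). (v,z)) (out_joint2 P))"

end

theory Submission
  imports Defs
begin


lemma ln_le_2sqrt: "y > 0 \<Longrightarrow> ln y \<le> 2 * (sqrt y - 1)"
proof -
  assume y: "y > 0"
  have "ln y = 2 * ln (sqrt y)" using y by (simp add: ln_sqrt)
  also have "\<dots> \<le> 2 * (sqrt y - 1)" using y ln_le_minus_one[of "sqrt y"] by simp
  finally show ?thesis .
qed

lemma termY:
  fixes J pi p :: real
  assumes "0 \<le> J" "J \<le> pi" "J \<le> p"
  shows "J * ln (J / (pi * p)) \<le> J * (2 * J / pi - 1) + J * (1 / (2 * p) - 1)"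
proof (cases "J = 0")
  case True then show ?thesis by simp
next
  case False
  then have J: "J > 0" using assms by simp
  have pi: "pi > 0" "p > 0" using J assms by auto
  have "ln (J / (pi * p)) = ln (2 * J / pi) + ln (1 / (2 * p))"
    using J pi by (simp add: ln_mult ln_div)
  also have "\<dots> \<le> (2 * J / pi - 1) + (1 / (2 * p) - 1)"
    by (intro add_mono ln_le_minus_one) (use J pi in auto)
  finally show ?thesis using J by (simp add: distrib_left[symmetric] mult_left_mono)
qed

lemma termZ:
  fixes K R :: real
  assumes "0 \<le> K" "0 < R"
  shows "K * ln (K / R) \<ge> K - R + (K - R)^2 / (2 * (K + R))"
proof (cases "K = 0")
  case True then show ?thesis using assms by (simp add: power2_eq_square)
next
  case False
  then have K: "K > 0" using assms by simp
  have "ln (R / K) \<le> 2 * (sqrt (R / K) - 1)" using K assms by (intro ln_le_2sqrt) simp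
  then have "K * ln (R / K) \<le> K * (2 * (sqrt (R / K) - 1))" using K by (intro mult_left_mono) auto
  also have "K * (2 * (sqrt (R / K) - 1)) = 2 * sqrt K * sqrt R - 2 * K"
    using K assms by (simp add: real_sqrt_divide field_simps)
  finally have A0: "K * ln (R / K) \<le> 2 * sqrt K * sqrt R - 2 * K" .
  have "ln (K / R) = - ln (R / K)" using K assms by (simp add: ln_div)
  then have A: "K * ln (K / R) \<ge> 2 * K - 2 * sqrt K * sqrt R" using A0 by simp
  have sK: "sqrt K ^ 2 = K" "sqrt R ^ 2 = R" using K assms by auto
  have B: "(K - R)^2 \<le> (sqrt K - sqrt R)^2 * (2 * (K + R))"
  proof -
    have eqK: "(K - R)^2 = (sqrt K - sqrt R)^2 * (sqrt K + sqrt R)^2"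
      using sK by (simp add: power2_eq_square algebra_simps)
    have e2: "(sqrt K + sqrt R)^2 + (sqrt K - sqrt R)^2 = 2 * (K + R)"
      using sK by (simp add: power2_eq_square algebra_simps)
    have "(sqrt K + sqrt R)^2 \<le> 2 * (K + R)"
      using e2 zero_le_power2[of "sqrt K - sqrt R"] by linarith
    then have "(sqrt K - sqrt R)^2 * (sqrt K + sqrt R)^2 \<le> (sqrt K - sqrt R)^2 * (2 * (K + R))"
      by (intro mult_left_mono) auto
    then show ?thesis using eqK by simp
  qed
  have C: "(K - R)^2 / (2 * (K + R)) \<le> (sqrt K - sqrt R)^2"
    using B K assms by (simp add: divide_le_eq)
  have "2 * K - 2 * sqrt K * sqrt R = K - R + (sqrt K - sqrt R)^2"
    using sK by (simp add: power2_eq_square algebra_simps)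
  then show ?thesis using A C by linarith
qed

lemma harm: fixes x y d :: real assumes "x > 0" "y > 0"
  shows "d^2 / (2*x) + d^2 / (2*y) \<ge> 2 * d^2 / (x + y)"
proof -
  have e: "(x + y)^2 - 4*x*y = (x-y)^2" by (simp add: power2_eq_square algebra_simps)
  have "4*x*y \<le> (x+y)^2" using e zero_le_power2[of "x - y"] by linarith
  then have "2 / (x + y) \<le> 1/(2*x) + 1/(2*y)"
    using assms by (simp add: field_simps power2_eq_square)
  then have "d^2 * (2 / (x + y)) \<le> d^2 * (1/(2*x) + 1/(2*y))" by (intro mult_left_mono) auto
  then show ?thesis by (simp add: algebra_simps)
qed

lemma core:
  fixes V :: "'v set" and a b c pi :: "'v \<Rightarrow> real" and p0 p1 m :: real
  assumes fin: "finite V" and nn: "\<And>v. v\<in>V \<Longrightarrow> a v \<ge> 0 \<and> b v \<ge> 0 \<and> c v \<ge> 0"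
   and pidef: "\<And>v. pi v = a v + b v + c v"
   and tot: "(\<Sum>v\<in>V. pi v) = 1" and mdef: "m = (\<Sum>v\<in>V. a v + b v)" and mle: "m \<le> 1/2"
   and p0def: "p0 = (\<Sum>v\<in>V. a v + c v / 2)" and p1def: "p1 = (\<Sum>v\<in>V. b v + c v / 2)"
  shows "(\<Sum>v\<in>V. (a v + c v/2) * ln ((a v + c v/2) / (pi v * p0)) + (b v + c v/2) * ln ((b v + c v/2) / (pi v * p1)))
       - (\<Sum>v\<in>V. (a v + b v) * ln ((a v + b v) / (pi v * m)) + c v * ln (c v / (pi v * (1 - m)))) \<le> m^2"
proof -
  define J0 where "J0 v = a v + c v / 2" for v
  define J1 where "J1 v = b v + c v / 2" for v
  define FY where "FY v = J0 v * ln (J0 v / (pi v * p0)) + J1 v * ln (J1 v / (pi v * p1))" for v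
  define FZ where "FZ v = (a v + b v) * ln ((a v + b v) / (pi v * m)) + c v * ln (c v / (pi v * (1 - m)))" for v
  define d where "d v = a v + b v - pi v * m" for v
  have J0le: "J0 v \<le> p0" if "v \<in> V" for v
    unfolding p0def J0_def[symmetric] using that fin nn by (intro member_le_sum) (auto simp: J0_def)
  have J1le: "J1 v \<le> p1" if "v \<in> V" for v
    unfolding p1def J1_def[symmetric] using that fin nn by (intro member_le_sum) (auto simp: J1_def)
  have m0: "m \<ge> 0" unfolding mdef using nn by (intro sum_nonneg) auto
  have Y: "FY v \<le> (a v - b v)^2 / pi v + J0 v * (1 / (2 * p0) - 1) + J1 v * (1 / (2 * p1) - 1)"
    if v: "v \<in> V" for v
  proof (cases "pi v = 0")
    case True
    then have "a v = 0" "b v = 0" "c v = 0" using nn[OF v] pidef[of v] by auto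
    then show ?thesis by (simp add: FY_def J0_def J1_def)
  next
    case False
    then have pos: "pi v > 0" proof -
      have "pi v \<ge> 0" using nn[OF v] by (simp add: pidef)
      then show ?thesis using False by linarith
    qed
    have "FY v \<le> (J0 v * (2 * J0 v / pi v - 1) + J0 v * (1 / (2 * p0) - 1))
              + (J1 v * (2 * J1 v / pi v - 1) + J1 v * (1 / (2 * p1) - 1))"
      unfolding FY_def using nn[OF v] J0le[OF v] J1le[OF v]
      by (intro add_mono termY) (auto simp: J0_def J1_def pidef)
    have "J0 v * (2 * J0 v / pi v - 1) + J1 v * (2 * J1 v / pi v - 1)
        = (2 * J0 v * J0 v + 2 * J1 v * J1 v - pi v * (J0 v + J1 v)) / pi v"
      using pos by (simp add: field_simps)
    moreover have "2 * J0 v * J0 v + 2 * J1 v * J1 v - pi v * (J0 v + J1 v) = (a v - b v)^2"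
      by (simp add: J0_def J1_def pidef power2_eq_square algebra_simps)
    ultimately have "J0 v * (2 * J0 v / pi v - 1) + J1 v * (2 * J1 v / pi v - 1) = (a v - b v)^2 / pi v"
      by simp
    with \<open>FY v \<le> _\<close> show ?thesis by linarith
  qed
  have Z: "FZ v \<ge> (d v)^2 / pi v" if v: "v \<in> V" for v
  proof (cases "pi v = 0")
    case True
    then have "a v = 0" "b v = 0" "c v = 0" using nn[OF v] pidef[of v] by auto
    then show ?thesis by (simp add: FZ_def d_def True)
  next
    case False
    then have pos: "pi v > 0" proof -
      have "pi v \<ge> 0" using nn[OF v] by (simp add: pidef)
      then show ?thesis using False by linarith
    qed
    show ?thesis
    proof (cases "m = 0")
      case True
      have "\<forall>w\<in>V. a w + b w = 0" using mdef True fin nn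
        by (subst sum_nonneg_eq_0_iff[symmetric]) auto
      then have ab: "a v + b v = 0" using v by auto
      then have "c v = pi v" using pidef[of v] by simp
      then show ?thesis using ab pos by (simp add: FZ_def d_def True)
    next
      case False
      then have mp: "m > 0" using m0 by simp
      have R1: "pi v * m > 0" using pos mp by simp
      have R0: "pi v * (1 - m) > 0" using pos mle by simp
      have "FZ v \<ge> ((a v + b v) - pi v * m + ((a v + b v) - pi v * m)^2 / (2 * ((a v + b v) + pi v * m)))
                + (c v - pi v * (1 - m) + (c v - pi v * (1 - m))^2 / (2 * (c v + pi v * (1 - m))))"
        unfolding FZ_def using nn[OF v] R1 R0 by (intro add_mono termZ) auto
      moreover have "c v - pi v * (1 - m) = - d v" by (simp add: d_def pidef algebra_simps)
      moreover have "(a v + b v) - pi v * m = d v" by (simp add: d_def)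
      moreover have "(d v)^2 / (2 * ((a v + b v) + pi v * m)) + (d v)^2 / (2 * (c v + pi v * (1 - m)))
            \<ge> 2 * (d v)^2 / (((a v + b v) + pi v * m) + (c v + pi v * (1 - m)))"
        using nn[OF v] R1 R0 by (intro harm) auto
      moreover have "((a v + b v) + pi v * m) + (c v + pi v * (1 - m)) = 2 * pi v"
        by (simp add: pidef algebra_simps)
      ultimately show ?thesis using pos by (simp add: power2_eq_square)
    qed
  qed
  have C: "(a v - b v)^2 / pi v - (d v)^2 / pi v \<le> 2 * (a v + b v) * m - pi v * m^2" if v: "v \<in> V" for v
  proof (cases "pi v = 0")
    case True
    then have "a v = 0" "b v = 0" "c v = 0" using nn[OF v] pidef[of v] by auto
    then show ?thesis by (simp add: True)
  next
    case False
    then have pos: "pi v > 0" proof -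
      have "pi v \<ge> 0" using nn[OF v] by (simp add: pidef)
      then show ?thesis using False by linarith
    qed
    have "(a v - b v)^2 \<le> (a v + b v)^2" using nn[OF v] by (simp add: power2_eq_square algebra_simps)
    then have "(a v - b v)^2 / pi v - (d v)^2 / pi v \<le> ((a v + b v)^2 - (d v)^2) / pi v"
      using pos by (simp add: diff_divide_distrib divide_right_mono)
    also have "((a v + b v)^2 - (d v)^2) / pi v = 2 * (a v + b v) * m - pi v * m^2"
      using pos by (simp add: d_def field_simps power2_eq_square)
    finally show ?thesis .
  qed
  have "(\<Sum>v\<in>V. FY v) - (\<Sum>v\<in>V. FZ v) = (\<Sum>v\<in>V. FY v - FZ v)" by (simp add: sum_subtractf)
  also have "\<dots> \<le> (\<Sum>v\<in>V. (2 * (a v + b v) * m - pi v * m^2) + J0 v * (1 / (2 * p0) - 1) + J1 v * (1 / (2 * p1) - 1))"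
    using Y Z C by (intro sum_mono) fastforce
  also have "\<dots> = 2 * m * m - m^2 + p0 * (1 / (2 * p0) - 1) + p1 * (1 / (2 * p1) - 1)"
  proof -
    have s1: "(\<Sum>v\<in>V. 2 * (a v + b v) * m - pi v * m^2) = 2 * m * m - m^2"
    proof -
      have "(\<Sum>v\<in>V. 2 * (a v + b v) * m - pi v * m^2) = (2 * m) * (\<Sum>v\<in>V. a v + b v) - (\<Sum>v\<in>V. pi v) * m^2"
        by (simp add: sum_subtractf sum_distrib_right sum_distrib_left algebra_simps)
      then show ?thesis by (simp add: mdef[symmetric] tot)
    qed
    have s2: "(\<Sum>v\<in>V. J0 v * (1 / (2 * p0) - 1)) = p0 * (1 / (2 * p0) - 1)"
      by (simp add: sum_distrib_right[symmetric] p0def J0_def)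
    have s3: "(\<Sum>v\<in>V. J1 v * (1 / (2 * p1) - 1)) = p1 * (1 / (2 * p1) - 1)"
      by (simp add: sum_distrib_right[symmetric] p1def J1_def)
    show ?thesis using s1 s2 s3 by (simp add: sum.distrib)
  qed
  finally have fin0: "(\<Sum>v\<in>V. FY v) - (\<Sum>v\<in>V. FZ v) \<le> 2 * m * m - m^2 + p0 * (1 / (2 * p0) - 1) + p1 * (1 / (2 * p1) - 1)" .
  have "p0 * (1 / (2 * p0) - 1) \<le> 1/2 - p0" by (cases "p0 = 0") (auto simp: field_simps)
  moreover have "p1 * (1 / (2 * p1) - 1) \<le> 1/2 - p1" by (cases "p1 = 0") (auto simp: field_simps)
  ultimately have fin1: "(\<Sum>v\<in>V. FY v) - (\<Sum>v\<in>V. FZ v) \<le> 2 * m * m - m^2 + (1/2 - p0) + (1/2 - p1)"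
    using fin0 by linarith
  have "p0 + p1 = 1" using tot by (simp add: p0def p1def pidef sum.distrib[symmetric] algebra_simps)
  then have "(\<Sum>v\<in>V. FY v) - (\<Sum>v\<in>V. FZ v) \<le> m^2" using fin1 by (simp add: power2_eq_square)
  then show ?thesis by (simp add: FY_def FZ_def J0_def J1_def)
qed



lemma mi_sum:
  fixes J :: "('b \<times> 'c) pmf"
  assumes fin: "finite T" and sub: "set_pmf J \<subseteq> T"
  shows "mutual_info J = (\<Sum>(b,c)\<in>T. pmf J (b,c) * log 2 (pmf J (b,c) / (pmf (map_pmf fst J) b * pmf (map_pmf snd J) c)))"
proof -
  define g where "g = (\<lambda>(b::'b,c::'c). ((),b,c))"
  have ginj: "inj g" by (auto simp: g_def inj_def)
  have m1: "pmf (map_pmf fst (map_pmf g J)) () = 1"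
    by (simp add: map_pmf_comp g_def split_beta)
  have m2: "pmf (map_pmf (\<lambda>(a,b,c). (a,b)) (map_pmf g J)) ((),b) = pmf (map_pmf fst J) b" for b
  proof -
    have "map_pmf (\<lambda>(a,b,c). (a,b)) (map_pmf g J) = map_pmf (Pair ()) (map_pmf fst J)"
      by (simp add: map_pmf_comp g_def split_beta)
    then show ?thesis by (simp add: pmf_map_inj' inj_def)
  qed
  have m3: "pmf (map_pmf (\<lambda>(a,b,c). (a,c)) (map_pmf g J)) ((),c) = pmf (map_pmf snd J) c" for c
  proof -
    have "map_pmf (\<lambda>(a,b,c). (a,c)) (map_pmf g J) = map_pmf (Pair ()) (map_pmf snd J)"
      by (simp add: map_pmf_comp g_def split_beta)
    then show ?thesis by (simp add: pmf_map_inj' inj_def)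
  qed
  have pg: "pmf (map_pmf g J) (g t) = pmf J t" for t using ginj by (simp add: pmf_map_inj')
  have "mutual_info J = (\<Sum>t\<in>g ` set_pmf J. (case t of (a,b,c) \<Rightarrow>
        pmf (map_pmf g J) (a,b,c) * log 2 (pmf (map_pmf g J) (a,b,c) * pmf (map_pmf fst (map_pmf g J)) a /
               (pmf (map_pmf (\<lambda>(a,b,c). (a,b)) (map_pmf g J)) (a,b) *
                pmf (map_pmf (\<lambda>(a,b,c). (a,c)) (map_pmf g J)) (a,c)))))"
    unfolding mutual_info_def cond_mutual_info_def g_def[symmetric] by simp
  also have "\<dots> = (\<Sum>t\<in>set_pmf J. (case g t of (a,b,c) \<Rightarrow>
        pmf (map_pmf g J) (a,b,c) * log 2 (pmf (map_pmf g J) (a,b,c) * pmf (map_pmf fst (map_pmf g J)) a /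
               (pmf (map_pmf (\<lambda>(a,b,c). (a,b)) (map_pmf g J)) (a,b) *
                pmf (map_pmf (\<lambda>(a,b,c). (a,c)) (map_pmf g J)) (a,c)))))"
    using ginj by (subst sum.reindex) (auto intro: inj_on_subset)
  also have "\<dots> = (\<Sum>(b,c)\<in>set_pmf J. pmf J (b,c) * log 2 (pmf J (b,c) / (pmf (map_pmf fst J) b * pmf (map_pmf snd J) c)))"
    apply (intro sum.cong refl)
    subgoal for t using pg[of t] m1 m2 m3 by (cases t) (simp add: g_def)
    done
  also have "\<dots> = (\<Sum>(b,c)\<in>T. pmf J (b,c) * log 2 (pmf J (b,c) / (pmf (map_pmf fst J) b * pmf (map_pmf snd J) c)))"
    using fin sub by (intro sum.mono_neutral_left) (auto simp: set_pmf_eq)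
  finally show ?thesis .
qed

lemma marg_snd:
  assumes "finite A" "set_pmf J \<subseteq> A \<times> UNIV"
  shows "pmf (map_pmf snd J) y = (\<Sum>v\<in>A. pmf J (v,y))"
proof -
  have "pmf (map_pmf snd J) y = measure J (snd -` {y})" by (rule pmf_map)
  also have "\<dots> = measure J (snd -` {y} \<inter> set_pmf J)" by (simp add: measure_Int_set_pmf)
  also have "snd -` {y} \<inter> set_pmf J = (A \<times> {y}) \<inter> set_pmf J" using assms by auto
  also have "measure J \<dots> = measure J (A \<times> {y})" by (simp add: measure_Int_set_pmf)
  also have "\<dots> = (\<Sum>w\<in>A \<times> {y}. pmf J w)" using assms by (simp add: measure_measure_pmf_finite)
  also have "\<dots> = (\<Sum>v\<in>A. pmf J (v,y))"
  proof -
    have "A \<times> {y} = (\<lambda>v. (v,y)) ` A" by auto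
    then show ?thesis by (simp add: sum.reindex inj_on_def)
  qed
  finally show ?thesis .
qed

lemma marg_fst:
  assumes "finite B" "set_pmf J \<subseteq> UNIV \<times> B"
  shows "pmf (map_pmf fst J) v = (\<Sum>y\<in>B. pmf J (v,y))"
proof -
  have "pmf (map_pmf fst J) v = measure J (fst -` {v})" by (rule pmf_map)
  also have "\<dots> = measure J (fst -` {v} \<inter> set_pmf J)" by (simp add: measure_Int_set_pmf)
  also have "fst -` {v} \<inter> set_pmf J = ({v} \<times> B) \<inter> set_pmf J" using assms by auto
  also have "measure J \<dots> = measure J ({v} \<times> B)" by (simp add: measure_Int_set_pmf)
  also have "\<dots> = (\<Sum>w\<in>{v} \<times> B. pmf J w)" using assms by (simp add: measure_measure_pmf_finite)
  also have "\<dots> = (\<Sum>y\<in>B. pmf J (v,y))"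
  proof -
    have "{v} \<times> B = (\<lambda>y. (v,y)) ` B" by auto
    then show ?thesis by (simp add: sum.reindex inj_on_def)
  qed
  finally show ?thesis .
qed

lemma pmf_map_bern_half:
  "pmf (map_pmf f (bernoulli_pmf (1/2))) x = ((if f True = x then 1 else 0) + (if f False = x then 1 else 0)) / 2"
proof -
  have "pmf (map_pmf f (bernoulli_pmf (1/2))) x = measure (measure_pmf (bernoulli_pmf (1/2))) (f -` {x})"
    by (rule pmf_map)
  also have "\<dots> = sum (pmf (bernoulli_pmf (1/2))) (f -` {x})"
    by (rule measure_measure_pmf_finite) simp
  also have "\<dots> = (\<Sum>b\<in>UNIV. if f b = x then pmf (bernoulli_pmf (1/2)) b else 0)"
    using sum.inter_filter[of "UNIV::bool set" "pmf (bernoulli_pmf (1/2))" "\<lambda>b. f b = x"]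
    by (simp add: vimage_def)
  also have "\<dots> = ((if f True = x then 1 else 0) + (if f False = x then 1 else 0)) / 2"
    by (simp add: UNIV_bool add_divide_distrib)
  finally show ?thesis .
qed

lemma wt: "pmf (map_pmf h (wiretap x)) t =
   ((if h (fst x * snd x + (1 - snd x), snd x) = t then 1 else 0) + (if h (fst x * snd x, snd x) = t then 1 else 0)) / 2"
  unfolding wiretap_def by (simp add: map_pmf_comp pmf_map_bern_half)

lemma Gv:
  assumes alphS: "\<forall>w\<in>set_pmf P. snd w \<in> input_alph"
  shows "pmf (map_pmf (\<lambda>(v,y,z). (v, h y z)) (out_joint2 P)) (v0, t) =
     (\<Sum>x\<in>input_alph. pmf P (v0,x) * pmf (map_pmf (\<lambda>(y,z). h y z) (wiretap x)) t)"
proof -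
  define f where "f w = pmf (map_pmf (\<lambda>(y,z). (fst w, h y z)) (wiretap (snd w))) (v0,t)" for w
  have e1: "map_pmf (\<lambda>(v,y,z). (v, h y z)) (out_joint2 P) = bind_pmf P (\<lambda>w. map_pmf (\<lambda>(y,z). (fst w, h y z)) (wiretap (snd w)))"
    unfolding out_joint2_def by (simp add: map_bind_pmf map_pmf_comp case_prod_unfold)
  have fw: "f w = (if fst w = v0 then pmf (map_pmf (\<lambda>(y,z). h y z) (wiretap (snd w))) t else 0)" for w
  proof -
    have "map_pmf (\<lambda>(y,z). (fst w, h y z)) (wiretap (snd w)) = map_pmf (Pair (fst w)) (map_pmf (\<lambda>(y,z). h y z) (wiretap (snd w)))"
      by (simp add: map_pmf_comp case_prod_unfold)
    moreover have "pmf (map_pmf (Pair c) M) (v0, t) = (if c = v0 then pmf M t else 0)" for c and M :: "'b pmf"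
    proof (cases "c = v0")
      case True then show ?thesis using pmf_map_inj'[of "Pair v0" M t] by (simp add: inj_def)
    next
      case False
      then have "(v0,t) \<notin> set_pmf (map_pmf (Pair c) M)" by auto
      then have "pmf (map_pmf (Pair c) M) (v0,t) = 0" by (simp only: pmf_eq_0_set_pmf not_False_eq_True)
      then show ?thesis using False by simp
    qed
    ultimately show ?thesis unfolding f_def by simp
  qed
  have "pmf (map_pmf (\<lambda>(v,y,z). (v, h y z)) (out_joint2 P)) (v0, t) = (\<integral>w. f w \<partial>measure_pmf P)"
    unfolding e1 pmf_bind f_def ..
  also have "\<dots> = (\<Sum>w\<in>{v0} \<times> input_alph. f w * pmf P w)"
    by (rule integral_measure_pmf_real) (auto simp: input_alph_def fw split: if_splits dest: alphS[rule_format])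
  also have "\<dots> = (\<Sum>x\<in>input_alph. pmf P (v0,x) * pmf (map_pmf (\<lambda>(y,z). h y z) (wiretap x)) t)"
  proof -
    have "{v0} \<times> input_alph = Pair v0 ` input_alph" by auto
    then show ?thesis by (simp add: sum.reindex inj_on_def fw mult.commute)
  qed
  finally show ?thesis .
qed

lemma alph_eq: "input_alph = {(0,0),(0,1),(1,0),(1,1)}" by (auto simp: input_alph_def)

lemma obj2_bound:
  fixes P :: "(nat \<times> (nat \<times> nat)) pmf"
  assumes finS: "finite (set_pmf P)" and alphS: "\<forall>w\<in>set_pmf P. snd w \<in> input_alph"
    and cst: "measure_pmf.expectation P (\<lambda>(v,x). cost x) \<le> 1/2"
  shows "obj2 P \<le> 1 / (4 * ln 2)"
proof -
  define V where "V = fst ` set_pmf P"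
  have finV: "finite V" using finS by (simp add: V_def)
  have SV: "set_pmf P \<subseteq> V \<times> input_alph" using alphS by (force simp: V_def)
  have finA: "finite input_alph" by (simp add: alph_eq)
  define a where "a v = pmf P (v,(0,1))" for v
  define b where "b v = pmf P (v,(1,1))" for v
  define c where "c v = pmf P (v,(0,0)) + pmf P (v,(1,0))" for v
  define JY where "JY = map_pmf (\<lambda>(v,y,z). (v,y)) (out_joint2 P)"
  define JZ where "JZ = map_pmf (\<lambda>(v,y,z). (v,z)) (out_joint2 P)"
  have supp: "set_pmf (out_joint2 P) \<subseteq> V \<times> {0,1} \<times> {0,1}"
  proof
    fix t assume "t \<in> set_pmf (out_joint2 P)"
    then obtain v x where vx: "(v,x) \<in> set_pmf P" "t \<in> (\<lambda>(y,z). (v,y,z)) ` set_pmf (wiretap x)"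
      unfolding out_joint2_def by auto
    have "x \<in> input_alph" "v \<in> V" using vx(1) SV by auto
    then show "t \<in> V \<times> {0,1} \<times> {0,1}" using vx(2) by (auto simp: wiretap_def alph_eq split: if_splits)
  qed
  have suppY: "set_pmf JY \<subseteq> V \<times> {0,1}" using supp by (auto simp: JY_def)
  have suppZ: "set_pmf JZ \<subseteq> V \<times> {0,1}" using supp by (auto simp: JZ_def)
  have JY0: "pmf JY (v,0) = a v + c v / 2" for v
    unfolding JY_def using Gv[OF alphS, of "\<lambda>y z. y" v 0] by (simp add: alph_eq wt a_def c_def)
  have JY1: "pmf JY (v,1) = b v + c v / 2" for v
    unfolding JY_def using Gv[OF alphS, of "\<lambda>y z. y" v 1] by (simp add: alph_eq wt b_def c_def)
  have JZ0: "pmf JZ (v,0) = c v" for v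
    unfolding JZ_def using Gv[OF alphS, of "\<lambda>y z. z" v 0] by (simp add: alph_eq wt c_def)
  have JZ1: "pmf JZ (v,1) = a v + b v" for v
    unfolding JZ_def using Gv[OF alphS, of "\<lambda>y z. z" v 1] by (simp add: alph_eq wt a_def b_def)
  have nnv: "a v \<ge> 0 \<and> b v \<ge> 0 \<and> c v \<ge> 0" for v by (simp add: a_def b_def c_def)
  have piY: "pmf (map_pmf fst JY) v = a v + b v + c v" for v
  proof -
    have "set_pmf JY \<subseteq> UNIV \<times> {0,1}" using suppY by auto
    from marg_fst[OF _ this] show ?thesis by (simp add: JY0 JY1 JY1[unfolded One_nat_def] algebra_simps)
  qed
  have piZ: "pmf (map_pmf fst JZ) v = a v + b v + c v" for v
  proof -
    have "set_pmf JZ \<subseteq> UNIV \<times> {0,1}" using suppZ by auto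
    from marg_fst[OF _ this] show ?thesis by (simp add: JZ0 JZ1 JZ1[unfolded One_nat_def] algebra_simps)
  qed
  have pY0: "pmf (map_pmf snd JY) 0 = (\<Sum>v\<in>V. a v + c v / 2)"
    using marg_snd[OF finV, of JY 0] suppY JY0 by auto
  have pY1: "pmf (map_pmf snd JY) 1 = (\<Sum>v\<in>V. b v + c v / 2)"
    using marg_snd[OF finV, of JY 1] suppY JY1 by auto
  have pZ0: "pmf (map_pmf snd JZ) 0 = (\<Sum>v\<in>V. c v)"
    using marg_snd[OF finV, of JZ 0] suppZ JZ0 by auto
  have pZ1: "pmf (map_pmf snd JZ) 1 = (\<Sum>v\<in>V. a v + b v)"
    using marg_snd[OF finV, of JZ 1] suppZ JZ1 by auto
  have tot: "(\<Sum>v\<in>V. a v + b v + c v) = 1"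
  proof -
    have "(\<Sum>v\<in>V. a v + b v + c v) = (\<Sum>v\<in>V. \<Sum>x\<in>input_alph. pmf P (v,x))"
      by (simp add: alph_eq a_def b_def c_def algebra_simps)
    also have "\<dots> = (\<Sum>w\<in>V \<times> input_alph. pmf P w)" by (simp add: sum.cartesian_product)
    also have "\<dots> = 1" using finV finA SV by (intro sum_pmf_eq_1) auto
    finally show ?thesis .
  qed
  define m where "m = (\<Sum>v\<in>V. a v + b v)"
  have cm: "(\<Sum>v\<in>V. c v) = 1 - m"
    using tot unfolding m_def by (simp add: sum.distrib algebra_simps)
  have expm: "measure_pmf.expectation P (\<lambda>(v,x). cost x) = m"
  proof -
    have "measure_pmf.expectation P (\<lambda>(v,x). cost x) = (\<Sum>w\<in>V \<times> input_alph. (case w of (v,x) \<Rightarrow> cost x) * pmf P w)"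
      using finV finA SV by (intro integral_measure_pmf_real) auto
    also have "\<dots> = (\<Sum>v\<in>V. \<Sum>x\<in>input_alph. cost x * pmf P (v,x))"
      by (simp add: sum.cartesian_product split_beta)
    also have "\<dots> = m" by (simp add: m_def alph_eq cost_def a_def b_def)
    finally show ?thesis .
  qed
  have mle: "m \<le> 1/2" using cst expm by simp
  have MY: "mutual_info JY = (\<Sum>v\<in>V. (a v + c v/2) * ln ((a v + c v/2) / ((a v + b v + c v) * (\<Sum>v\<in>V. a v + c v / 2)))
      + (b v + c v/2) * ln ((b v + c v/2) / ((a v + b v + c v) * (\<Sum>v\<in>V. b v + c v / 2)))) / ln 2"
  proof -
    have "mutual_info JY = (\<Sum>(v,y)\<in>V \<times> {0,1}. pmf JY (v,y) * log 2 (pmf JY (v,y) / (pmf (map_pmf fst JY) v * pmf (map_pmf snd JY) y)))"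
      using finV suppY by (intro mi_sum) auto
    also have "\<dots> = (\<Sum>v\<in>V. \<Sum>y\<in>{0,1}. pmf JY (v,y) * log 2 (pmf JY (v,y) / (pmf (map_pmf fst JY) v * pmf (map_pmf snd JY) y)))"
      by (rule sum.cartesian_product[symmetric])
    also have "\<dots> = (\<Sum>v\<in>V. ((a v + c v/2) * ln ((a v + c v/2) / ((a v + b v + c v) * (\<Sum>v\<in>V. a v + c v / 2)))
      + (b v + c v/2) * ln ((b v + c v/2) / ((a v + b v + c v) * (\<Sum>v\<in>V. b v + c v / 2)))) / ln 2)"
      by (simp add: JY0 JY1 JY1[unfolded One_nat_def] piY pY0 pY1 pY1[unfolded One_nat_def] log_def add_divide_distrib)
    finally show ?thesis by (simp add: sum_divide_distrib)
  qed
  have MZ: "mutual_info JZ = (\<Sum>v\<in>V. (a v + b v) * ln ((a v + b v) / ((a v + b v + c v) * m))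
      + c v * ln (c v / ((a v + b v + c v) * (1 - m)))) / ln 2"
  proof -
    have "mutual_info JZ = (\<Sum>(v,y)\<in>V \<times> {0,1}. pmf JZ (v,y) * log 2 (pmf JZ (v,y) / (pmf (map_pmf fst JZ) v * pmf (map_pmf snd JZ) y)))"
      using finV suppZ by (intro mi_sum) auto
    also have "\<dots> = (\<Sum>v\<in>V. \<Sum>y\<in>{0,1}. pmf JZ (v,y) * log 2 (pmf JZ (v,y) / (pmf (map_pmf fst JZ) v * pmf (map_pmf snd JZ) y)))"
      by (rule sum.cartesian_product[symmetric])
    also have "\<dots> = (\<Sum>v\<in>V. ((a v + b v) * ln ((a v + b v) / ((a v + b v + c v) * m))
      + c v * ln (c v / ((a v + b v + c v) * (1 - m)))) / ln 2)"
      by (simp add: JZ0 JZ1 JZ1[unfolded One_nat_def] piZ pZ0 pZ1 pZ1[unfolded One_nat_def] cm m_def[symmetric] log_def add_divide_distrib add.commute)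
    finally show ?thesis by (simp add: sum_divide_distrib)
  qed
  have core_app: "(\<Sum>v\<in>V. (a v + c v/2) * ln ((a v + c v/2) / ((a v + b v + c v) * (\<Sum>v\<in>V. a v + c v / 2)))
      + (b v + c v/2) * ln ((b v + c v/2) / ((a v + b v + c v) * (\<Sum>v\<in>V. b v + c v / 2))))
     - (\<Sum>v\<in>V. (a v + b v) * ln ((a v + b v) / ((a v + b v + c v) * m))
      + c v * ln (c v / ((a v + b v + c v) * (1 - m)))) \<le> m^2"
    by (rule core[OF finV nnv _ tot m_def mle refl refl]) simp
  have "m^2 \<le> 1/4"
  proof -
    have "m \<ge> 0" unfolding m_def using nnv by (intro sum_nonneg) (auto intro: add_nonneg_nonneg)
    then have "m * m \<le> (1/2) * (1/2)" using mle by (intro mult_mono) auto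
    then show ?thesis by (simp add: power2_eq_square)
  qed
  have l2: "ln (2::real) > 0" by simp
  have "obj2 P = ((\<Sum>v\<in>V. (a v + c v/2) * ln ((a v + c v/2) / ((a v + b v + c v) * (\<Sum>v\<in>V. a v + c v / 2)))
      + (b v + c v/2) * ln ((b v + c v/2) / ((a v + b v + c v) * (\<Sum>v\<in>V. b v + c v / 2))))
     - (\<Sum>v\<in>V. (a v + b v) * ln ((a v + b v) / ((a v + b v + c v) * m))
      + c v * ln (c v / ((a v + b v + c v) * (1 - m))))) / ln 2"
    unfolding obj2_def JY_def[symmetric] JZ_def[symmetric] MY MZ by (simp add: diff_divide_distrib)
  also have "\<dots> \<le> (1/4) / ln 2"
    using core_app \<open>m^2 \<le> 1/4\<close> l2 by (intro divide_right_mono) auto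
  finally show ?thesis by simp
qed

definition PUV1 :: "(nat \<times> nat) pmf" where "PUV1 = pmf_of_set {(0,0),(0,1),(1,2),(1,3)}"
definition K1 :: "nat \<Rightarrow> (nat \<times> nat) pmf" where
  "K1 v = return_pmf (if v \<le> 1 then (0,0) else if v = 2 then (0,1) else (1,1))"

lemma J1: "out_joint3 (markov_joint PUV1 K1) = bind_pmf PUV1 (\<lambda>a. map_pmf (\<lambda>n.
   (let x = (if snd a \<le> 1 then (0::nat,0::nat) else if snd a = 2 then (0,1) else (1,1)) in
    (fst a,snd a,fst x * snd x + (if n then 1 else 0) * (1 - snd x), snd x))) (bernoulli_pmf (1/2)))"
  unfolding out_joint3_def markov_joint_def K1_def wiretap_def
  by (simp add: bind_assoc_pmf bind_return_pmf map_pmf_comp case_prod_beta Let_def split_beta bind_map_pmf)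

lemma supY: "set_pmf (map_pmf (\<lambda>(u,v,y,z). (u,v,y)) (out_joint3 (markov_joint PUV1 K1))) = {(0,0,0),(0,0,1),(0,1,0),(0,1,1),(1,2,0),(1,3,1)}"
  unfolding J1 unfolding PUV1_def
  by (auto simp add: map_bind_pmf map_pmf_comp UNIV_bool)

lemma supZ: "set_pmf (map_pmf (\<lambda>(u,v,y,z). (u,v,z)) (out_joint3 (markov_joint PUV1 K1))) = {(0,0,0),(0,1,0),(1,2,1),(1,3,1)}"
  unfolding J1 unfolding PUV1_def
  by (auto simp add: map_bind_pmf map_pmf_comp UNIV_bool)

lemma obj3_val: "obj3 (markov_joint PUV1 K1) = 1/2"
  unfolding obj3_def cond_mutual_info_def supY supZ
  unfolding J1 unfolding PUV1_def
  apply (simp add: map_bind_pmf map_pmf_comp pmf_bind_pmf_of_set pmf_map_bern_half)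
  done

lemma exp1: "measure_pmf.expectation (markov_joint PUV1 K1) (\<lambda>(u,v,x). cost x) \<le> 1/2"
proof -
  have "markov_joint PUV1 K1 = map_pmf (\<lambda>(u,v). (u,v,(if v \<le> 1 then (0::nat,0::nat) else if v = 2 then (0,1) else (1,1)))) PUV1"
    unfolding markov_joint_def K1_def map_pmf_def by (simp add: case_prod_unfold bind_return_pmf)
  then show ?thesis unfolding PUV1_def by (simp add: integral_pmf_of_set cost_def)
qed

lemma ln2_gt: "ln (2::real) > 1/2"
proof -
  have "ln (4::real) > ln (272/100)" by simp
  then have "ln (4::real) > 1" using ln_272_gt_1 by linarith
  moreover have "ln (4::real) = 2 * ln 2"
    using ln_mult[of "2::real" 2] by simp
  ultimately show ?thesis by simp
qed

theorem proposition1: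
  shows "(\<exists>(PUV :: (nat \<times> nat) pmf) (K :: nat \<Rightarrow> (nat \<times> nat) pmf).
            finite (set_pmf PUV) \<and>
            (\<forall>v. set_pmf (K v) \<subseteq> input_alph) \<and>
            measure_pmf.expectation (markov_joint PUV K) (\<lambda>(u,v,x). cost x) \<le> 1/2 \<and>
            obj3 (markov_joint PUV K) \<ge> 1/2)
       \<and> (\<exists>c < 1/2. \<forall>(P :: (nat \<times> (nat \<times> nat)) pmf).
            finite (set_pmf P) \<and>
            (\<forall>w\<in>set_pmf P. snd w \<in> input_alph) \<and>
            measure_pmf.expectation P (\<lambda>(v,x). cost x) \<le> 1/2
            \<longrightarrow> obj2 P \<le> c)"
proof (intro conjI)
  show "\<exists>(PUV :: (nat \<times> nat) pmf) (K :: nat \<Rightarrow> (nat \<times> nat) pmf).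
            finite (set_pmf PUV) \<and>
            (\<forall>v. set_pmf (K v) \<subseteq> input_alph) \<and>
            measure_pmf.expectation (markov_joint PUV K) (\<lambda>(u,v,x). cost x) \<le> 1/2 \<and>
            obj3 (markov_joint PUV K) \<ge> 1/2"
    using exp1 obj3_val
    by (intro exI[of _ PUV1] exI[of _ K1]) (auto simp: PUV1_def K1_def input_alph_def)
next
  have c: "1 / (4 * ln 2) < (1/2 :: real)" using ln2_gt by (simp add: field_simps)
  show "\<exists>c < 1/2. \<forall>(P :: (nat \<times> (nat \<times> nat)) pmf).
            finite (set_pmf P) \<and>
            (\<forall>w\<in>set_pmf P. snd w \<in> input_alph) \<and>
            measure_pmf.expectation P (\<lambda>(v,x). cost x) \<le> 1/2
            \<longrightarrow> obj2 P \<le> c"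
    using c obj2_bound by blast
qed

end
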